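(* Let $m,n\ge1$ and let $\mu$ be a partition with fewer than $m$ positive parts and $\mu_1<n$. Then the $m\times n$ matrix $M^\mu(m,n)$ is a partial alternating sign matrix whose first row sum is $1$, whose first column sum is $1$, and all of whose other row sums and column sums are $0$.
   Context: A partition $\mu=(\mu_1\ge\mu_2\ge\cdots)$ is a weakly decreasing sequence of nonnegative integers with finitely many nonzero terms. For such $\mu$ with fewer than $m$ positive parts and $\mu_1<n$, the $m\times n$ matrix $M^\mu(m,n)$ has entries: $M^\mu_{1,\mu_1+1}=1$; for each $1\le k\le m-1$ with $\mu_k>\mu_{k+1}$, $M^\mu_{k+1,\mu_{k+1}+1}=1$ and $M^\mu_{k+1,\mu_k+1}=-1$; all other entries are $0$. An $m\times n$ partial alternating sign matrix is an $m\times n$ matrix $M$ with entries in $\{-1,0,1\}$ such that $\sum_{i'=1}^{i}M_{i'j}\in\{0,1\}$ and $\sum_{j'=1}^{j}M_{ij'}\in\{0,1\}$ for all $1\le i\le m$, $1\le j\le n$. *)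

theory Defs
  imports Main
begin

text \<open>Partitions are sequences indexed from 1: the parts are mu 1, mu 2, ...
  (the value mu 0 is irrelevant). Matrices are functions nat => nat => int,
  with rows indexed 1..m and columns 1..n.\<close>

definition is_partition :: "(nat \<Rightarrow> nat) \<Rightarrow> bool" where
  "is_partition mu \<longleftrightarrow> (\<forall>i\<ge>1. mu (Suc i) \<le> mu i) \<and> finite {i. 1 \<le> i \<and> 0 < mu i}"

definition num_pos_parts :: "(nat \<Rightarrow> nat) \<Rightarrow> nat" where
  "num_pos_parts mu = card {i. 1 \<le> i \<and> 0 < mu i}"

definition Mmu :: "(nat \<Rightarrow> nat) \<Rightarrow> nat \<Rightarrow> nat \<Rightarrow> nat \<Rightarrow> nat \<Rightarrow> int" where
  "Mmu mu m n i j =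
    (if 1 \<le> i \<and> i \<le> m \<and> 1 \<le> j \<and> j \<le> n then
       (if i = 1 \<and> j = mu 1 + 1 then 1
        else if 2 \<le> i \<and> mu (i - 1) > mu i \<and> j = mu i + 1 then 1
        else if 2 \<le> i \<and> mu (i - 1) > mu i \<and> j = mu (i - 1) + 1 then -1
        else 0)
     else 0)"

definition partial_asm :: "nat \<Rightarrow> nat \<Rightarrow> (nat \<Rightarrow> nat \<Rightarrow> int) \<Rightarrow> bool" where
  "partial_asm m n M \<longleftrightarrow>
     (\<forall>i\<in>{1..m}. \<forall>j\<in>{1..n}. M i j \<in> {-1, 0, 1}) \<and>
     (\<forall>i\<in>{1..m}. \<forall>j\<in>{1..n}. (\<Sum>i'=1..i. M i' j) \<in> {0, 1}) \<and>
     (\<forall>i\<in>{1..m}. \<forall>j\<in>{1..n}. (\<Sum>j'=1..j. M i j') \<in> {0, 1})"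

end

theory Submission
  imports Defs
begin

lemma part_mono:
  assumes "is_partition mu" "1 \<le> i" "i \<le> j"
  shows "mu j \<le> mu i"
  using assms(3)
proof (induction j rule: dec_induct)
  case base then show ?case by simp
next
  case (step k)
  have "mu (Suc k) \<le> mu k" using assms(1,2) step(1) unfolding is_partition_def by auto
  then show ?case using step by simp
qed

lemma mu_m_zero:
  assumes "is_partition mu" "num_pos_parts mu < m" "1 \<le> m"
  shows "mu m = 0"
proof (rule ccontr)
  assume "mu m \<noteq> 0"
  then have "{1..m} \<subseteq> {i. 1 \<le> i \<and> 0 < mu i}"
    using part_mono[OF assms(1)] by (auto, metis le_zero_eq not_gr_zero)
  moreover have "finite {i. 1 \<le> i \<and> 0 < mu i}" using assms(1) unfolding is_partition_def by auto
  ultimately have "card {1..m} \<le> num_pos_parts mu" unfolding num_pos_parts_def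
    by (rule card_mono[rotated])
  then show False using assms(2) by simp
qed

definition ee :: "(nat \<Rightarrow> nat) \<Rightarrow> nat \<Rightarrow> nat \<Rightarrow> int" where
  "ee mu i j = (if 1 \<le> i \<and> j = mu i + 1 then 1 else 0)"

lemma M_eq:
  assumes "is_partition mu" "1 \<le> i" "i \<le> m" "1 \<le> j" "j \<le> n"
  shows "Mmu mu m n i j = ee mu i j - ee mu (i - 1) j"
proof (cases "i = 1")
  case True then show ?thesis using assms unfolding Mmu_def ee_def by auto
next
  case False
  then have "mu i \<le> mu (i - 1)" using part_mono[OF assms(1), of "i - 1" i] assms by auto
  then show ?thesis using assms False unfolding Mmu_def ee_def by auto
qed

lemma ee_rowsum:
  "(\<Sum>j'=1..j. ee mu i j') = (if 1 \<le> i \<and> mu i < j then 1 else 0)"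
proof -
  have "(\<Sum>j'=1..j. ee mu i j') = (\<Sum>j'\<in>{1..j}. if j' = mu i + 1 then (if 1 \<le> i then 1 else 0) else 0)"
    unfolding ee_def by (rule sum.cong) auto
  also have "\<dots> = (if 1 \<le> i \<and> mu i < j then 1 else 0)"
    by (subst sum.delta) auto
  finally show ?thesis .
qed

lemma colsum:
  assumes "is_partition mu" "i \<le> m" "1 \<le> j" "j \<le> n"
  shows "(\<Sum>i'=1..i. Mmu mu m n i' j) = ee mu i j"
  using assms(2)
proof (induction i)
  case 0 then show ?case by (simp add: ee_def)
next
  case (Suc k)
  have "(\<Sum>i'=1..Suc k. Mmu mu m n i' j) = (\<Sum>i'=1..k. Mmu mu m n i' j) + Mmu mu m n (Suc k) j"
    by simp
  also have "\<dots> = ee mu (Suc k) j"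
    using Suc M_eq[OF assms(1), of "Suc k" m j n] assms by simp
  finally show ?case .
qed

lemma rowsum:
  assumes "is_partition mu" "1 \<le> i" "i \<le> m" "j \<le> n"
  shows "(\<Sum>j'=1..j. Mmu mu m n i j') =
     (if mu i < j then 1 else 0) - (if 2 \<le> i \<and> mu (i - 1) < j then 1 else 0)"
proof -
  have "(\<Sum>j'=1..j. Mmu mu m n i j') = (\<Sum>j'=1..j. ee mu i j' - ee mu (i - 1) j')"
    using M_eq[OF assms(1,2,3)] assms(4) by (intro sum.cong) auto
  also have "\<dots> = (\<Sum>j'=1..j. ee mu i j') - (\<Sum>j'=1..j. ee mu (i - 1) j')"
    by (simp add: sum_subtractf)
  also have "\<dots> = (if mu i < j then 1 else 0) - (if 2 \<le> i \<and> mu (i - 1) < j then 1 else 0)"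
    unfolding ee_rowsum using assms(2) by auto
  finally show ?thesis .
qed

theorem mainTheorem2:
  fixes m n :: nat and mu :: "nat \<Rightarrow> nat"
  assumes "1 \<le> m" and "1 \<le> n"
    and "is_partition mu"
    and "num_pos_parts mu < m"
    and "mu 1 < n"
  shows "partial_asm m n (Mmu mu m n)
    \<and> (\<Sum>j=1..n. Mmu mu m n 1 j) = 1
    \<and> (\<Sum>i=1..m. Mmu mu m n i 1) = 1
    \<and> (\<forall>i\<in>{2..m}. (\<Sum>j=1..n. Mmu mu m n i j) = 0)
    \<and> (\<forall>j\<in>{2..n}. (\<Sum>i=1..m. Mmu mu m n i j) = 0)"
proof -
  have mum: "mu m = 0" using mu_m_zero assms by blast
  have mono: "\<And>i. 2 \<le> i \<Longrightarrow> mu i \<le> mu (i - 1)"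
    using part_mono[OF assms(3)] by simp
  have le1: "\<And>i. 1 \<le> i \<Longrightarrow> mu i \<le> mu 1"
    using part_mono[OF assms(3)] by simp
  have A: "\<forall>i\<in>{1..m}. \<forall>j\<in>{1..n}. Mmu mu m n i j \<in> {-1, 0, 1}"
    unfolding Mmu_def by auto
  have B: "\<forall>i\<in>{1..m}. \<forall>j\<in>{1..n}. (\<Sum>i'=1..i. Mmu mu m n i' j) \<in> {0, 1}"
    using colsum[OF assms(3)] by (auto simp: ee_def)
  have C: "\<forall>i\<in>{1..m}. \<forall>j\<in>{1..n}. (\<Sum>j'=1..j. Mmu mu m n i j') \<in> {0, 1}"
  proof (intro ballI)
    fix i j assume i: "i \<in> {1..m}" and j: "j \<in> {1..n}"
    show "(\<Sum>j'=1..j. Mmu mu m n i j') \<in> {0, 1}"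
      using rowsum[OF assms(3), of i m j n] i j mono[of i] by auto
  qed
  have D: "(\<Sum>j=1..n. Mmu mu m n 1 j) = 1"
    using rowsum[OF assms(3), of 1 m n n] assms by simp
  have E: "(\<Sum>i=1..m. Mmu mu m n i 1) = 1"
    using colsum[OF assms(3), of m m 1 n] assms mum by (simp add: ee_def)
  have F: "\<forall>i\<in>{2..m}. (\<Sum>j=1..n. Mmu mu m n i j) = 0"
  proof
    fix i assume i: "i \<in> {2..m}"
    then have "1 \<le> i - 1" by auto
    with i show "(\<Sum>j=1..n. Mmu mu m n i j) = 0"
      using rowsum[OF assms(3), of i m n n] le1[of i] le1[of "i - 1"] assms by auto
  qed
  have G: "\<forall>j\<in>{2..n}. (\<Sum>i=1..m. Mmu mu m n i j) = 0"
    using colsum[OF assms(3), of m m] assms mum by (auto simp: ee_def)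
  show ?thesis using A B C D E F G unfolding partial_asm_def by blast
qed

end
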